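(* Let $Q\succeq0$, $q\in\mathbb{R}^n$, $A\succ0$, $v\in\mathbb{R}^n$, and let $m>0$ satisfy Requirement 2. Let $x_1\in\mathcal{C}$ and define $x_{k+1}=x_k-\gamma_k\nabla J_k(x_k)$ for $k\in\mathbb{N}$, where the step sizes satisfy $0<\gamma_k\le 1/L_k$ for all $k$, $\sum_{k=1}^\infty\gamma_k^2<\infty$ and $\sum_{k=1}^\infty\gamma_k=\infty$. Then for any minimizer $x^\star\in\mathcal{X}^\star$ of the constrained problem, $f(x_k)\to f(x^\star)$ as $k\to\infty$.
   Context: $Q\in\mathbb{R}^{n\times n}$ symmetric positive semidefinite, $A\in\mathbb{R}^{n\times n}$ symmetric positive definite. $f(x)=\tfrac12 x^\top Qx+q^\top x$, $g(x)=(x-v)^\top A(x-v)$, $\mathcal{C}=\{x:g(x)\le1\}$, $\partial\mathcal{C}=\{x:g(x)=1\}$, $\mathcal{X}^\star=\arg\min_{x\in\mathcal{C}}f(x)$. $J_k(x)=f(x)+\frac{m}{k}g(x)^k$ for $k\in\mathbb{N}=\{1,2,\dots\}$, $L_k=\bar\sigma(Q+m(4k-2)A)$, with $\bar\sigma,\underline\sigma$ the largest/smallest singular value; $r=\sqrt{\underline\sigma(A)}/\bar\sigma(A)$. Requirement 2: with $w(x)=\nabla f(x)+m\nabla g(x)$, for every $x\in\partial\mathcal{C}$, $\|w(x)\|^2\|\nabla g(x)\|\le 2rL_1\langle w(x),\nabla g(x)\rangle$ (i.e. $\|w(x)\|\le 2rL_1\cos\phi(x)$ with $\phi(x)$ the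 angle between $w(x)$ and $\nabla g(x)$). *)

theory Defs
  imports "HOL-Analysis.Analysis"
begin

definition grad :: "(real^'n \<Rightarrow> real) \<Rightarrow> real^'n \<Rightarrow> real^'n" where
  "grad F x = (THE d. (F has_derivative (\<lambda>h. d \<bullet> h)) (at x))"

definition sigma_max :: "real^'n^'n \<Rightarrow> real" where
  "sigma_max M = onorm (\<lambda>x. M *v x)"

definition sigma_min :: "real^'n^'n \<Rightarrow> real" where
  "sigma_min M = Inf {norm (M *v x) | x. norm x = 1}"

definition sym_psd :: "real^'n^'n \<Rightarrow> bool" where
  "sym_psd M \<longleftrightarrow> transpose M = M \<and> (\<forall>x. 0 \<le> x \<bullet> (M *v x))"

definition sym_pd :: "real^'n^'n \<Rightarrow> bool" where
  "sym_pd M \<longleftrightarrow> transpose M = M \<and> (\<forall>x. x \<noteq> 0 \<longrightarrow> 0 < x \<bullet> (M *v x))"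

definition fobj :: "real^'n^'n \<Rightarrow> real^'n \<Rightarrow> real^'n \<Rightarrow> real" where
  "fobj Q q x = (1/2) * (x \<bullet> (Q *v x)) + q \<bullet> x"

definition gcon :: "real^'n^'n \<Rightarrow> real^'n \<Rightarrow> real^'n \<Rightarrow> real" where
  "gcon A v x = (x - v) \<bullet> (A *v (x - v))"

definition Jpen :: "real^'n^'n \<Rightarrow> real^'n \<Rightarrow> real^'n^'n \<Rightarrow> real^'n \<Rightarrow> real \<Rightarrow> nat \<Rightarrow> real^'n \<Rightarrow> real" where
  "Jpen Q q A v m k x = fobj Q q x + (m / real k) * (gcon A v x) ^ k"

definition Lconst :: "real^'n^'n \<Rightarrow> real^'n^'n \<Rightarrow> real \<Rightarrow> nat \<Rightarrow> real" where
  "Lconst Q A m k = sigma_max (Q + (m * (4 * real k - 2)) *\<^sub>R A)"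

definition rconst :: "real^'n^'n \<Rightarrow> real" where
  "rconst A = sqrt (sigma_min A) / sigma_max A"

definition requirement2 :: "real^'n^'n \<Rightarrow> real^'n \<Rightarrow> real^'n^'n \<Rightarrow> real^'n \<Rightarrow> real \<Rightarrow> bool" where
  "requirement2 Q q A v m \<longleftrightarrow>
     (\<forall>x. gcon A v x = 1 \<longrightarrow>
        (let w = grad (fobj Q q) x + m *\<^sub>R grad (gcon A v) x in
         (norm w)^2 * norm (grad (gcon A v) x)
           \<le> 2 * rconst A * Lconst Q A m 1 * (w \<bullet> grad (gcon A v) x)))"

end

theory Submission
  imports Defs
begin

lemma symdot:
  fixes M :: "real^'n^'n"
  assumes "transpose M = M"
  shows "x \<bullet> (M *v y) = (M *v x) \<bullet> y"
proof -
  have "(M *v x) \<bullet> y = (x v* transpose M) \<bullet> y" by simp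
  also have "\<dots> = x \<bullet> (transpose M *v y)" by (rule dot_lmul_matrix)
  finally show ?thesis using assms by simp
qed

lemma psd_cs:
  fixes M :: "real^'n^'n"
  assumes "transpose M = M" "\<And>z. 0 \<le> z \<bullet> (M *v z)"
  shows "(x \<bullet> (M *v y))^2 \<le> (x \<bullet> (M *v x)) * (y \<bullet> (M *v y))"
proof -
  define a where "a = x \<bullet> (M *v x)"
  define b where "b = x \<bullet> (M *v y)"
  define c where "c = y \<bullet> (M *v y)"
  have yx: "y \<bullet> (M *v x) = b" unfolding b_def using symdot[OF assms(1)] by (simp add: inner_commute)
  have key: "0 \<le> a + 2*t*b + t^2*c" for t
  proof -
    have "0 \<le> (x + t *\<^sub>R y) \<bullet> (M *v (x + t *\<^sub>R y))" by (rule assms(2))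
    also have "\<dots> = a + t * (x \<bullet> (M *v y)) + t * (y \<bullet> (M *v x)) + t^2 * c"
      unfolding a_def c_def
      by (simp add: matrix_vector_right_distrib matrix_vector_mult_scaleR inner_add_left inner_add_right power2_eq_square algebra_simps)
    finally show ?thesis using yx b_def by (simp add: algebra_simps)
  qed
  have c0: "0 \<le> c" unfolding c_def by (rule assms(2))
  show ?thesis
  proof (cases "c = 0")
    case True
    have "b = 0"
    proof (rule ccontr)
      assume "b \<noteq> 0"
      have "0 \<le> a + 2 * (-(a+1)/(2*b)) * b + (-(a+1)/(2*b))^2 * c" by (rule key)
      also have "\<dots> = -1" using \<open>b \<noteq> 0\<close> True by (simp add: field_simps)
      finally show False by simp
    qed
    then show ?thesis using True a_def b_def c_def by simp
  next
    case False
    then have cp: "c > 0" using c0 by simp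
    have "0 \<le> a + 2 * (-b/c) * b + (-b/c)^2 * c" by (rule key)
    also have "\<dots> = a - b^2/c" using cp by (simp add: field_simps power2_eq_square)
    finally have "b^2/c \<le> a" by simp
    then have "b^2 \<le> a * c" using cp by (simp add: divide_le_eq)
    then show ?thesis unfolding a_def b_def c_def by simp
  qed
qed

lemma grad_eq:
  assumes "(F has_derivative (\<lambda>h. d \<bullet> h)) (at x)"
  shows "grad F x = d"
  unfolding grad_def
proof (rule the_equality)
  show "(F has_derivative (\<lambda>h. d \<bullet> h)) (at x)" by fact
  fix d' assume "(F has_derivative (\<lambda>h. d' \<bullet> h)) (at x)"
  then have "(\<lambda>h. d' \<bullet> h) = (\<lambda>h. d \<bullet> h)" using assms by (rule has_derivative_unique)
  then have "d' \<bullet> (d' - d) = d \<bullet> (d' - d)" by meson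
  then have "(d' - d) \<bullet> (d' - d) = 0" by (simp add: inner_diff_left)
  then show "d' = d" by simp
qed

lemma deriv_fobj:
  fixes Q :: "real^'n^'n"
  assumes "transpose Q = Q"
  shows "(fobj Q q has_derivative (\<lambda>h. (Q *v x + q) \<bullet> h)) (at x)"
proof -
  have "(fobj Q q has_derivative (\<lambda>h. 1/2 * (h \<bullet> (Q *v x) + x \<bullet> (Q *v h)) + q \<bullet> h)) (at x)"
    unfolding fobj_def[abs_def]
    by (auto intro!: derivative_eq_intros bounded_linear_imp_has_derivative)
  moreover have "(\<lambda>h. 1/2 * (h \<bullet> (Q *v x) + x \<bullet> (Q *v h)) + q \<bullet> h) = (\<lambda>h. (Q *v x + q) \<bullet> h)"
    using symdot[OF assms] by (auto simp: fun_eq_iff inner_add_left inner_commute algebra_simps)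
  ultimately show ?thesis by simp
qed

lemma deriv_gcon:
  fixes A :: "real^'n^'n"
  assumes "transpose A = A"
  shows "(gcon A v has_derivative (\<lambda>h. (2 *\<^sub>R (A *v (x - v))) \<bullet> h)) (at x)"
proof -
  have "(gcon A v has_derivative (\<lambda>h. h \<bullet> (A *v (x - v)) + (x - v) \<bullet> (A *v h))) (at x)"
    unfolding gcon_def[abs_def]
    by (auto intro!: derivative_eq_intros bounded_linear_imp_has_derivative simp: matrix_vector_mult_diff_distrib)
  moreover have "(\<lambda>h. h \<bullet> (A *v (x - v)) + (x - v) \<bullet> (A *v h)) = (\<lambda>h. (2 *\<^sub>R (A *v (x - v))) \<bullet> h)"
    using symdot[OF assms] by (auto simp: fun_eq_iff inner_commute algebra_simps)
  ultimately show ?thesis by simp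
qed

lemma grad_fobj: "transpose Q = Q \<Longrightarrow> grad (fobj Q q) x = Q *v x + q"
  by (rule grad_eq[OF deriv_fobj])

lemma grad_gcon: "transpose A = A \<Longrightarrow> grad (gcon A v) x = 2 *\<^sub>R (A *v (x - v))"
  by (rule grad_eq[OF deriv_gcon])

lemma grad_Jpen:
  fixes Q A :: "real^'n^'n"
  assumes "transpose Q = Q" "transpose A = A" "k \<ge> 1"
  shows "grad (Jpen Q q A v m k) x = (Q *v x + q) + (m * gcon A v x ^ (k - 1)) *\<^sub>R (2 *\<^sub>R (A *v (x - v)))"
proof (rule grad_eq)
  have "(Jpen Q q A v m k has_derivative (\<lambda>h. (Q *v x + q) \<bullet> h + m / real k * (real k * ((2 *\<^sub>R (A *v (x - v))) \<bullet> h) * gcon A v x ^ (k - 1)))) (at x)"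
    unfolding Jpen_def[abs_def] using assms(3)
    by (auto intro!: derivative_eq_intros deriv_fobj[OF assms(1)] deriv_gcon[OF assms(2)])
  moreover have "(\<lambda>h. (Q *v x + q) \<bullet> h + m / real k * (real k * ((2 *\<^sub>R (A *v (x - v))) \<bullet> h) * gcon A v x ^ (k - 1)))
     = (\<lambda>h. ((Q *v x + q) + (m * gcon A v x ^ (k - 1)) *\<^sub>R (2 *\<^sub>R (A *v (x - v)))) \<bullet> h)"
  proof -
    have "real k \<noteq> 0" using assms(3) by simp
    then show ?thesis by (auto simp: fun_eq_iff inner_add_left)
  qed
  ultimately show "(Jpen Q q A v m k has_derivative (\<lambda>h. ((Q *v x + q) + (m * gcon A v x ^ (k - 1)) *\<^sub>R (2 *\<^sub>R (A *v (x - v)))) \<bullet> h)) (at x)"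
    by simp
qed


lemma cs_gen:
  fixes F :: "real^'n \<Rightarrow> real^'n"
  assumes lin: "\<And>x y t. F (x + t *\<^sub>R y) = F x + t *\<^sub>R F y"
    and sym: "\<And>x y. x \<bullet> F y = F x \<bullet> y"
    and psd: "\<And>z. 0 \<le> z \<bullet> F z"
  shows "(x \<bullet> F y)^2 \<le> (x \<bullet> F x) * (y \<bullet> F y)"
proof -
  define a where "a = x \<bullet> F x"
  define b where "b = x \<bullet> F y"
  define c where "c = y \<bullet> F y"
  have yx: "y \<bullet> F x = b" unfolding b_def using sym by (simp add: inner_commute)
  have key: "0 \<le> a + 2*t*b + t^2*c" for t
  proof -
    have "0 \<le> (x + t *\<^sub>R y) \<bullet> F (x + t *\<^sub>R y)" by (rule psd)
    also have "\<dots> = a + t * (x \<bullet> F y) + t * (y \<bullet> F x) + t^2 * c"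
      unfolding a_def c_def lin
      by (simp add: inner_add_left inner_add_right power2_eq_square algebra_simps)
    finally show ?thesis using yx b_def by (simp add: algebra_simps)
  qed
  have c0: "0 \<le> c" unfolding c_def by (rule psd)
  show ?thesis
  proof (cases "c = 0")
    case True
    have "b = 0"
    proof (rule ccontr)
      assume "b \<noteq> 0"
      have "0 \<le> a + 2 * (-(a+1)/(2*b)) * b + (-(a+1)/(2*b))^2 * c" by (rule key)
      also have "\<dots> = -1" using \<open>b \<noteq> 0\<close> True by (simp add: field_simps)
      finally show False by simp
    qed
    then show ?thesis using True a_def b_def c_def by simp
  next
    case False
    then have cp: "c > 0" using c0 by simp
    have "0 \<le> a + 2 * (-b/c) * b + (-b/c)^2 * c" by (rule key)
    also have "\<dots> = a - b^2/c" using cp by (simp add: field_simps power2_eq_square)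
    finally have "b^2/c \<le> a" by simp
    then have "b^2 \<le> a * c" using cp by (simp add: divide_le_eq)
    then show ?thesis unfolding a_def b_def c_def by simp
  qed
qed

lemma crossing:
  fixes \<alpha> \<beta> :: "nat \<Rightarrow> real"
  assumes a0: "\<And>n. 0 \<le> \<alpha> n" and b0: "\<And>n. 0 \<le> \<beta> n"
    and sba: "summable (\<lambda>n. \<beta> n * \<alpha> n)" and nsb: "\<not> summable \<beta>"
    and bt: "\<beta> \<longlonglongrightarrow> 0" and inc: "\<And>n. \<alpha> (Suc n) - \<alpha> n \<le> K * \<beta> n" and K: "K > 0"
  shows "\<alpha> \<longlonglongrightarrow> 0"
proof (rule LIMSEQ_I)
  fix r :: real assume r: "r > 0"
  define e where "e = r / 2"
  have e: "e > 0" using r unfolding e_def by simp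
  define c where "c = e * e / (2 * K)"
  have c: "c > 0" using e K unfolding c_def by simp
  obtain M1 where M1: "\<And>a b. a \<ge> M1 \<Longrightarrow> norm (sum (\<lambda>i. \<beta> i * \<alpha> i) {a..<b}) < c"
    using sba[unfolded summable_Cauchy] c by meson
  obtain M2 where M2: "\<And>n. n \<ge> M2 \<Longrightarrow> norm (\<beta> n - 0) < e / (2 * K)"
    using LIMSEQ_D[OF bt, of "e / (2 * K)"] e K by auto
  define M where "M = max M1 M2"
  obtain N where N: "N \<ge> M" "\<alpha> N < e"
  proof (rule ccontr)
    assume "\<not> thesis"
    with that have H: "\<And>n. n \<ge> M \<Longrightarrow> \<alpha> n \<ge> e" by (meson not_le)
    have "summable (\<lambda>n. (1 / e) * (\<beta> n * \<alpha> n))" using sba by (rule summable_mult)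
    moreover have "norm (\<beta> n) \<le> (1 / e) * (\<beta> n * \<alpha> n)" if "n \<ge> M" for n
    proof -
      have "\<beta> n * e \<le> \<beta> n * \<alpha> n" using H[OF that] b0[of n] by (rule mult_left_mono)
      then show ?thesis using e b0[of n] by (simp add: field_simps)
    qed
    ultimately have "summable \<beta>" by (rule summable_comparison_test')
    then show False using nsb by simp
  qed
  have claim: "\<alpha> n < 2 * e" if n: "n \<ge> N" for n
  proof (rule ccontr)
    assume "\<not> \<alpha> n < 2 * e"
    then have an: "\<alpha> n \<ge> 2 * e" by simp
    define J where "J = {j. N \<le> j \<and> j \<le> n \<and> \<alpha> j < e}"
    have finJ: "finite J" unfolding J_def by (rule finite_subset[of _ "{..n}"]) auto
    have NJ: "N \<in> J" unfolding J_def using n N by simp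
    define j0 where "j0 = Max J"
    have j0J: "j0 \<in> J" unfolding j0_def using finJ NJ by (intro Max_in) auto
    then have j0: "N \<le> j0" "j0 \<le> n" "\<alpha> j0 < e" unfolding J_def by auto
    have j0n: "j0 < n" using j0 an e by (cases "j0 = n") auto
    have big: "\<alpha> i \<ge> e" if "j0 < i" "i \<le> n" for i
    proof (rule ccontr)
      assume "\<not> \<alpha> i \<ge> e"
      then have "i \<in> J" unfolding J_def using that j0 by auto
      then have "i \<le> j0" unfolding j0_def using finJ by simp
      then show False using that by simp
    qed
    have "\<alpha> n - \<alpha> j0 = (\<Sum>i = j0..<n. \<alpha> (Suc i) - \<alpha> i)"
      using j0 by (simp add: sum_Suc_diff')
    also have "\<dots> \<le> (\<Sum>i = j0..<n. K * \<beta> i)" by (rule sum_mono) (rule inc)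
    also have "\<dots> = K * (\<Sum>i = j0..<n. \<beta> i)" by (simp add: sum_distrib_left)
    finally have s1: "e < K * (\<Sum>i = j0..<n. \<beta> i)" using an j0 by simp
    have "(\<Sum>i = j0..<n. \<beta> i) = \<beta> j0 + (\<Sum>i = Suc j0..<n. \<beta> i)"
      using j0n by (simp add: sum.atLeast_Suc_lessThan)
    moreover have "\<beta> j0 < e / (2 * K)" using M2[of j0] j0 N unfolding M_def using b0[of j0] by simp
    ultimately have "e < K * (e / (2 * K) + (\<Sum>i = Suc j0..<n. \<beta> i))"
      using s1 K by (smt (verit) mult_strict_left_mono)
    then have s2: "e / 2 < K * (\<Sum>i = Suc j0..<n. \<beta> i)" using K by (simp add: algebra_simps)
    have "e * (\<Sum>i = Suc j0..<n. \<beta> i) \<le> (\<Sum>i = Suc j0..<n. \<beta> i * \<alpha> i)"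
      unfolding sum_distrib_left
    proof (rule sum_mono)
      fix i assume "i \<in> {Suc j0..<n}"
      then have "e \<le> \<alpha> i" using big by auto
      then show "e * \<beta> i \<le> \<beta> i * \<alpha> i" using b0[of i] by (simp add: mult.commute mult_right_mono)
    qed
    moreover have "(\<Sum>i = Suc j0..<n. \<beta> i * \<alpha> i) < c"
      using M1[of "Suc j0" n] j0 N unfolding M_def by simp
    ultimately have "e * (\<Sum>i = Suc j0..<n. \<beta> i) < c" by simp
    then have "K * (e * (\<Sum>i = Suc j0..<n. \<beta> i)) < K * c" using K by simp
    also have "K * c = e * (e / 2)" unfolding c_def using K by (simp add: field_simps)
    finally have "e * (K * (\<Sum>i = Suc j0..<n. \<beta> i)) < e * (e / 2)" by (simp add: mult_ac)
    then have "K * (\<Sum>i = Suc j0..<n. \<beta> i) < e / 2" using e by simp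
    then show False using s2 by simp
  qed
  show "\<exists>no. \<forall>n\<ge>no. norm (\<alpha> n - 0) < r"
    using claim a0 unfolding e_def by (intro exI[of _ N]) auto
qed


locale setting =
  fixes Q A :: "real^'n^'n" and q v :: "real^'n" and m :: real
  assumes Qpsd: "sym_psd Q" and Apd: "sym_pd A" and mpos: "m > 0"
    and req: "requirement2 Q q A v m"
begin

definition N :: "real^'n \<Rightarrow> real" where "N y = y \<bullet> (A *v y)"
definition bb :: "real^'n" where "bb = Q *v v + q"
definition Pk :: "nat \<Rightarrow> real^'n \<Rightarrow> real^'n" where
  "Pk k y = Q *v y + (m * (4 * real k - 2)) *\<^sub>R (A *v y)"
definition Lk :: "nat \<Rightarrow> real" where "Lk k = Lconst Q A m k"

lemma Qsym: "transpose Q = Q" using Qpsd unfolding sym_psd_def by simp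
lemma Asym: "transpose A = A" using Apd unfolding sym_pd_def by simp
lemma Qnn: "0 \<le> y \<bullet> (Q *v y)" using Qpsd unfolding sym_psd_def by simp
lemma Apos: "y \<noteq> 0 \<Longrightarrow> 0 < N y" using Apd unfolding sym_pd_def N_def by simp
lemma Ann: "0 \<le> N y" using Apos[of y] by (cases "y = 0") (auto simp: N_def)
lemma N_zero: "N y = 0 \<longleftrightarrow> y = 0" using Apos[of y] by (cases "y = 0") (auto simp: N_def)

lemma Qs: "x \<bullet> (Q *v y) = (Q *v x) \<bullet> y" by (rule symdot[OF Qsym])
lemma As: "x \<bullet> (A *v y) = (A *v x) \<bullet> y" by (rule symdot[OF Asym])

lemma A_lin: "A *v (x + t *\<^sub>R y) = A *v x + t *\<^sub>R (A *v y)"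
  by (simp add: matrix_vector_right_distrib matrix_vector_mult_scaleR)

lemma N_cs: "(x \<bullet> (A *v y))^2 \<le> N x * N y"
  unfolding N_def by (rule cs_gen[OF A_lin As Ann[unfolded N_def]])

lemma N_cs': "x \<bullet> (A *v y) \<le> sqrt (N x) * sqrt (N y)"
proof -
  have "x \<bullet> (A *v y) \<le> \<bar>x \<bullet> (A *v y)\<bar>" by simp
  also have "\<dots> = sqrt ((x \<bullet> (A *v y))^2)" by simp
  also have "\<dots> \<le> sqrt (N x * N y)" using N_cs by (rule real_sqrt_le_mono)
  also have "\<dots> = sqrt (N x) * sqrt (N y)" by (simp add: real_sqrt_mult)
  finally show ?thesis .
qed

lemma N_add: "N (x + y) = N x + 2 * (x \<bullet> (A *v y)) + N y"
  unfolding N_def using As[of y x]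
  by (simp add: matrix_vector_right_distrib inner_add_left inner_add_right inner_commute)

lemma N_scale: "N (c *\<^sub>R x) = c^2 * N x"
  unfolding N_def by (simp add: matrix_vector_mult_scaleR power2_eq_square)

lemma N_diff: "N (x - y) = N x - 2 * (x \<bullet> (A *v y)) + N y"
  unfolding N_def using As[of y x]
  by (simp add: matrix_vector_mult_diff_distrib inner_diff_left inner_diff_right inner_commute)

lemma N_conv:
  assumes "N x \<le> 1" "N y \<le> 1" "0 \<le> a" "a \<le> 1"
  shows "N (a *\<^sub>R x + (1 - a) *\<^sub>R y) \<le> 1"
proof -
  have eq: "N (a *\<^sub>R x + (1 - a) *\<^sub>R y) = a * N x + (1 - a) * N y - a * (1 - a) * N (x - y)"
    unfolding N_add N_scale N_diff
    by (simp add: matrix_vector_mult_scaleR power2_eq_square algebra_simps)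
  have "a * (1 - a) * N (x - y) \<ge> 0" using assms Ann by simp
  moreover have "a * N x + (1 - a) * N y \<le> a * 1 + (1 - a) * 1"
    using assms by (intro add_mono mult_left_mono) auto
  ultimately show ?thesis unfolding eq by simp
qed

lemma sqrtN_tri: "sqrt (N (x + y)) \<le> sqrt (N x) + sqrt (N y)"
proof -
  have "N (x + y) \<le> (sqrt (N x) + sqrt (N y))^2"
    unfolding N_add using N_cs'[of x y] Ann[of x] Ann[of y]
    by (simp add: power2_eq_square algebra_simps)
  then show ?thesis using Ann[of x] Ann[of y]
    by (metis add_nonneg_nonneg real_sqrt_ge_zero real_sqrt_le_iff real_sqrt_unique)
qed

lemma Pk_mat: "(Q + (m * (4 * real k - 2)) *\<^sub>R A) *v y = Pk k y"
  by (simp add: Pk_def matrix_vector_mult_add_rdistrib scaleR_matrix_vector_assoc)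

lemma Pk_bound: "norm (Pk k y) \<le> Lk k * norm y"
  using onorm[OF matrix_vector_mul_bounded_linear, of "Q + (m * (4 * real k - 2)) *\<^sub>R A" y]
  unfolding Lk_def Lconst_def sigma_max_def Pk_mat .

lemma Lk_nn: "0 \<le> Lk k"
  unfolding Lk_def Lconst_def sigma_max_def by (rule onorm_pos_le[OF matrix_vector_mul_bounded_linear])

lemma Pk_sym: "x \<bullet> Pk k y = Pk k x \<bullet> y"
  unfolding Pk_def using Qs As by (simp add: inner_add_left inner_add_right)

lemma Pk_lin: "Pk k (x + t *\<^sub>R y) = Pk k x + t *\<^sub>R Pk k y"
  unfolding Pk_def by (simp add: matrix_vector_right_distrib matrix_vector_mult_scaleR algebra_simps)

lemma Pk_diff: "Pk k (x - y) = Pk k x - Pk k y"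
  unfolding Pk_def by (simp add: matrix_vector_mult_diff_distrib algebra_simps)

lemma Pk_scale: "Pk k (c *\<^sub>R y) = c *\<^sub>R Pk k y"
  unfolding Pk_def by (simp add: matrix_vector_mult_scaleR algebra_simps)

lemma Pk_quad: "y \<bullet> Pk k y = y \<bullet> (Q *v y) + m * (4 * real k - 2) * N y"
  unfolding Pk_def N_def by (simp add: inner_add_right)

lemma Pk_psd: "k \<ge> 1 \<Longrightarrow> 0 \<le> y \<bullet> Pk k y"
  unfolding Pk_quad using Qnn[of y] Ann[of y] mpos by simp

lemma Pk_ray: "y \<bullet> Pk k y \<le> Lk k * (norm y)^2"
proof -
  have "y \<bullet> Pk k y \<le> norm y * norm (Pk k y)" by (rule norm_cauchy_schwarz)
  also have "\<dots> \<le> norm y * (Lk k * norm y)" by (rule mult_left_mono[OF Pk_bound]) simp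
  finally show ?thesis by (simp add: power2_eq_square algebra_simps)
qed

lemma Pk_mono: "1 \<le> j \<Longrightarrow> j \<le> k \<Longrightarrow> y \<bullet> Pk j y \<le> y \<bullet> Pk k y"
  unfolding Pk_quad using Ann[of y] mpos by (intro add_left_mono mult_right_mono) auto

lemma L1_le: assumes "k \<ge> 1" shows "Lk 1 \<le> Lk k"
proof -
  have bnd: "norm (Pk 1 x) \<le> Lk k * norm x" for x
  proof -
    define y where "y = Pk 1 x"
    have yy: "y \<bullet> y = x \<bullet> Pk 1 y" unfolding y_def by (simp add: Pk_sym)
    have "(x \<bullet> Pk 1 y)^2 \<le> (x \<bullet> Pk 1 x) * (y \<bullet> Pk 1 y)"
      by (rule cs_gen[OF Pk_lin Pk_sym Pk_psd]) simp
    also have "\<dots> \<le> (Lk k * (norm x)^2) * (Lk k * (norm y)^2)"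
      using Pk_psd[of 1 x] Pk_psd[of 1 y] Pk_mono[of 1 k x] Pk_mono[of 1 k y] assms
        Pk_ray[of x k] Pk_ray[of y k]
      by (intro mult_mono) auto
    finally have h0: "(x \<bullet> Pk 1 y)^2 \<le> (Lk k * (norm x)^2) * (Lk k * (norm y)^2)" .
    have h: "(x \<bullet> Pk 1 y)^2 \<le> (Lk k * norm x)^2 * (x \<bullet> Pk 1 y)"
    proof -
      have s: "(norm y)^2 = x \<bullet> Pk 1 y" using yy by (simp add: power2_norm_eq_inner)
      show ?thesis using h0 unfolding s by (simp add: power_mult_distrib power2_eq_square mult_ac)
    qed
    have s: "(norm y)^2 = x \<bullet> Pk 1 y" using yy by (simp add: power2_norm_eq_inner)
    have "(norm y)^2 \<le> (Lk k * norm x)^2"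
    proof (cases "y = 0")
      case False
      then have sp: "(norm y)^2 > 0" by simp
      have "(norm y)^2 * (norm y)^2 \<le> (Lk k * norm x)^2 * (norm y)^2"
        using h unfolding s[symmetric] by (simp add: power2_eq_square)
      then show ?thesis using sp by (rule mult_right_le_imp_le)
    qed simp
    then have "norm y \<le> Lk k * norm x"
      by (rule power2_le_imp_le) (simp add: Lk_nn)
    then show ?thesis unfolding y_def .
  qed
  have "Lk 1 = onorm (\<lambda>y. (Q + (m * (4 * real 1 - 2)) *\<^sub>R A) *v y)"
    unfolding Lk_def Lconst_def sigma_max_def by simp
  also have "\<dots> \<le> Lk k" unfolding Pk_mat by (rule onorm_le) (rule bnd)
  finally show ?thesis .
qed

lemma ex_nonzero: "\<exists>y::real^'n. y \<noteq> 0"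
  by (rule exI[of _ "axis undefined 1"]) simp

lemma L1_pos: "0 < Lk 1"
proof -
  obtain y :: "real^'n" where y: "y \<noteq> 0" using ex_nonzero by blast
  have "0 < 2 * m * N y" using Apos[OF y] mpos by simp
  also have "\<dots> \<le> y \<bullet> Pk 1 y" unfolding Pk_quad using Qnn[of y] by simp
  also have "\<dots> \<le> Lk 1 * (norm y)^2" by (rule Pk_ray)
  finally show ?thesis using y by (simp add: zero_less_mult_iff)
qed


lemma A_inj: "A *v x = A *v y \<Longrightarrow> x = y"
proof -
  assume "A *v x = A *v y"
  then have "A *v (x - y) = 0" by (simp add: matrix_vector_mult_diff_distrib)
  then have "N (x - y) = 0" by (simp add: N_def)
  then show "x = y" by (simp add: N_zero)
qed

lemma A_surj: "\<exists>z. A *v z = p"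
proof -
  have "surj (\<lambda>x. A *v x)"
    by (rule linear_injective_imp_surjective) (auto intro: injI A_inj)
  then show ?thesis by (metis surjD)
qed

definition Ainv :: "real^'n \<Rightarrow> real^'n" where "Ainv p = (SOME z. A *v z = p)"

lemma A_Ainv: "A *v Ainv p = p"
  unfolding Ainv_def by (rule someI_ex[OF A_surj])

lemma Ainv_linear: "linear Ainv"
proof (rule linearI)
  fix x y :: "real^'n" and c :: real
  show "Ainv (x + y) = Ainv x + Ainv y"
    by (rule A_inj) (simp add: A_Ainv matrix_vector_right_distrib)
  show "Ainv (c *\<^sub>R x) = c *\<^sub>R Ainv x"
    by (rule A_inj) (simp add: A_Ainv matrix_vector_mult_scaleR)
qed

lemma sigA_bound: "norm (A *v y) \<le> sigma_max A * norm y"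
  unfolding sigma_max_def by (rule onorm[OF matrix_vector_mul_bounded_linear])

lemma sigA_nn: "0 \<le> sigma_max A"
  unfolding sigma_max_def by (rule onorm_pos_le[OF matrix_vector_mul_bounded_linear])

lemma N_le_sig: "N w \<le> sigma_max A * (norm w)^2"
proof -
  have "N w \<le> norm w * norm (A *v w)" unfolding N_def by (rule norm_cauchy_schwarz)
  also have "\<dots> \<le> norm w * (sigma_max A * norm w)" by (rule mult_left_mono[OF sigA_bound]) simp
  finally show ?thesis by (simp add: power2_eq_square algebra_simps)
qed

lemma sigmin_nn: "0 \<le> sigma_min A"
  unfolding sigma_min_def
proof (rule cInf_greatest)
  obtain y :: "real^'n" where "y \<noteq> 0" using ex_nonzero by blast
  then have "norm ((1 / norm y) *\<^sub>R y) = 1" by simp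
  then show "{norm (A *v x) |x. norm x = 1} \<noteq> {}" by blast
qed auto

lemma Ae_ge: assumes "N e = 1" shows "sqrt (sigma_min A) \<le> norm (A *v e)"
proof -
  have e0: "e \<noteq> 0" using assms by (auto simp: N_def)
  have "sigma_min A \<le> norm (A *v ((1 / norm e) *\<^sub>R e))"
    unfolding sigma_min_def
    by (rule cInf_lower) (use e0 in \<open>auto intro: bdd_belowI[of _ 0]\<close>)
  also have "\<dots> = norm (A *v e) / norm e" by (simp add: matrix_vector_mult_scaleR)
  finally have s1: "sigma_min A * norm e \<le> norm (A *v e)" using e0 by (simp add: divide_simps)
  have "1 \<le> norm e * norm (A *v e)" using norm_cauchy_schwarz[of e "A *v e"] assms by (simp add: N_def)
  then have "sigma_min A * 1 \<le> sigma_min A * (norm e * norm (A *v e))"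
    using sigmin_nn by (rule mult_left_mono)
  also have "\<dots> \<le> norm (A *v e) * norm (A *v e)"
    using s1 by (simp add: mult.assoc[symmetric] mult_right_mono)
  finally have "sigma_min A \<le> (norm (A *v e))^2" by (simp add: power2_eq_square)
  then show ?thesis by (simp add: real_le_lsqrt)
qed


lemma Pk1: "Pk 1 y = Q *v y + (2 * m) *\<^sub>R (A *v y)"
  unfolding Pk_def by simp

lemma N_e_gcon: "gcon A v x = N (x - v)" unfolding gcon_def N_def ..

lemma bstep:
  assumes e: "N e = 1"
  shows "N (e - (1 / Lk 1) *\<^sub>R (Pk 1 e + bb)) \<le> 1"
proof -
  define L where "L = Lk 1"
  have Lp: "L > 0" unfolding L_def by (rule L1_pos)
  define w where "w = Pk 1 e + bb"
  have gx: "gcon A v (v + e) = 1" using e by (simp add: N_e_gcon)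
  have gf: "grad (fobj Q q) (v + e) = Q *v (v + e) + q" by (rule grad_fobj[OF Qsym])
  have gg: "grad (gcon A v) (v + e) = 2 *\<^sub>R (A *v e)" by (simp add: grad_gcon[OF Asym])
  have ww: "grad (fobj Q q) (v + e) + m *\<^sub>R (2 *\<^sub>R (A *v e)) = w"
    unfolding gf w_def Pk1 bb_def by (simp add: matrix_vector_right_distrib algebra_simps)
  have R: "(norm w)^2 * norm (2 *\<^sub>R (A *v e)) \<le> 2 * rconst A * L * (w \<bullet> (2 *\<^sub>R (A *v e)))"
    using req[unfolded requirement2_def, rule_format, OF gx] unfolding Let_def gg ww L_def Lk_def .
  have Ae0: "A *v e \<noteq> 0" using e by (auto simp: N_def)
  have key: "N w \<le> 2 * L * (w \<bullet> (A *v e))"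
  proof (cases "rconst A = 0")
    case True
    then have "(norm w)^2 * (2 * norm (A *v e)) \<le> 0" using R by simp
    then have "(norm w)^2 \<le> 0" using Ae0 by (simp add: mult_le_0_iff)
    then have "w = 0" by simp
    then show ?thesis by (simp add: N_def)
  next
    case False
    define s where "s = sigma_min A"
    define sg where "sg = sigma_max A"
    have r: "rconst A = sqrt s / sg" unfolding rconst_def s_def sg_def ..
    have sp: "s > 0" using False sigmin_nn unfolding r s_def by (cases "sigma_min A = 0") auto
    have sgp: "sg > 0" using False sigA_nn unfolding r sg_def by (cases "sigma_max A = 0") auto
    have "(norm w)^2 * (2 * norm (A *v e)) \<le> 2 * (sqrt s / sg) * L * (2 * (w \<bullet> (A *v e)))"
      using R unfolding r by simp
    then have "sg * ((norm w)^2 * norm (A *v e)) \<le> 2 * sqrt s * L * (w \<bullet> (A *v e))"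
      using sgp by (simp add: field_simps)
    moreover have "sg * ((norm w)^2 * sqrt s) \<le> sg * ((norm w)^2 * norm (A *v e))"
      using Ae_ge[OF e] sgp unfolding s_def by (intro mult_left_mono) auto
    ultimately have "sqrt s * (sg * (norm w)^2) \<le> sqrt s * (2 * L * (w \<bullet> (A *v e)))"
      by (simp add: algebra_simps)
    then have "sg * (norm w)^2 \<le> 2 * L * (w \<bullet> (A *v e))" using sp by simp
    then show ?thesis using N_le_sig[of w] unfolding sg_def by simp
  qed
  have "N (e - (1 / L) *\<^sub>R w) = N e - 2 * (1 / L) * (w \<bullet> (A *v e)) + (1 / L)^2 * N w"
    unfolding N_diff N_scale using As[of e w] by (simp add: matrix_vector_mult_scaleR inner_commute)
  also have "\<dots> \<le> 1 - 2 * (1 / L) * (w \<bullet> (A *v e)) + (1 / L)^2 * (2 * L * (w \<bullet> (A *v e)))"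
    using key e by (intro add_mono mult_left_mono) auto
  also have "\<dots> = 1" using Lp by (simp add: power2_eq_square field_simps)
  finally show ?thesis unfolding L_def w_def .
qed

lemma polar:
  assumes "N u \<le> 1"
  shows "\<exists>e t. N e = 1 \<and> 0 \<le> t \<and> t \<le> 1 \<and> u = t *\<^sub>R e"
proof (cases "u = 0")
  case True
  obtain y :: "real^'n" where y: "y \<noteq> 0" using ex_nonzero by blast
  define e where "e = (1 / sqrt (N y)) *\<^sub>R y"
  have "N e = 1" using Apos[OF y] unfolding e_def N_scale by (simp add: power_divide)
  then show ?thesis using True by (intro exI[of _ e] exI[of _ 0]) auto
next
  case False
  define t where "t = sqrt (N u)"
  have tp: "t > 0" using Apos[OF False] unfolding t_def by simp
  define e where "e = (1 / t) *\<^sub>R u"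
  have "N e = 1" using tp unfolding e_def N_scale t_def using Apos[OF False] by (simp add: power_divide)
  moreover have "t \<le> 1" using assms unfolding t_def by simp
  moreover have "u = t *\<^sub>R e" using tp unfolding e_def by simp
  ultimately show ?thesis using tp by (intro exI[of _ e] exI[of _ t]) auto
qed

lemma S_in:
  assumes "N u \<le> 1"
  shows "N (u - (1 / Lk 1) *\<^sub>R (Pk 1 u + bb)) \<le> 1"
proof -
  obtain e t where e: "N e = 1" and t: "0 \<le> t" "t \<le> 1" and u: "u = t *\<^sub>R e"
    using polar[OF assms] by blast
  define L where "L = Lk 1"
  have ne: "N (- e) = 1" using e N_scale[of "-1" e] by simp
  have "u - (1 / L) *\<^sub>R (Pk 1 u + bb)
      = ((1 + t) / 2) *\<^sub>R (e - (1 / L) *\<^sub>R (Pk 1 e + bb))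
        + (1 - (1 + t) / 2) *\<^sub>R ((- e) - (1 / L) *\<^sub>R (Pk 1 (- e) + bb))"
  proof -
    have Pm: "Pk 1 (- e) = - Pk 1 e" using Pk_scale[of 1 "-1" e] by simp
    have Lp: "L > 0" unfolding L_def by (rule L1_pos)
    show ?thesis unfolding u Pk_scale Pm using Lp by (simp add: vec_eq_iff field_simps)
  qed
  then show ?thesis unfolding L_def[symmetric]
    using N_conv[OF bstep[OF e] bstep[OF ne], of "(1 + t) / 2"] t L_def by simp
qed

lemma step_in:
  assumes "N u \<le> 1" "0 \<le> \<gamma>" "\<gamma> \<le> 1 / Lk 1"
  shows "N (u - \<gamma> *\<^sub>R (Pk 1 u + bb)) \<le> 1"
proof -
  define L where "L = Lk 1"
  have Lp: "L > 0" unfolding L_def by (rule L1_pos)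
  have a: "0 \<le> \<gamma> * L" "\<gamma> * L \<le> 1" using assms Lp unfolding L_def by (auto simp: field_simps)
  have "u - \<gamma> *\<^sub>R (Pk 1 u + bb) = (\<gamma> * L) *\<^sub>R (u - (1 / L) *\<^sub>R (Pk 1 u + bb)) + (1 - \<gamma> * L) *\<^sub>R u"
    using Lp by (simp add: algebra_simps)
  then show ?thesis using N_conv[OF S_in[OF assms(1)] assms(1) a] unfolding L_def by simp
qed


lemma le_sqrt_imp: assumes "(a::real) \<le> sqrt a" shows "a \<le> 1"
proof (rule ccontr)
  assume "\<not> a \<le> 1"
  then have "a > 1" by simp
  then have s1: "sqrt a > 1" by simp
  have "sqrt a * 1 < sqrt a * sqrt a" using s1 by (intro mult_strict_left_mono) auto
  also have "\<dots> = a" using \<open>a > 1\<close> by simp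
  finally have "sqrt a < a" by simp
  then show False using assms by simp
qed



lemma phi_in:
  assumes k: "k \<ge> 1" and g: "0 < \<gamma>" "\<gamma> \<le> 1 / Lk k" and y: "N y \<le> 1"
  shows "N (((2 * real k - 2) / (2 * real k - 1)) *\<^sub>R (y - \<gamma> *\<^sub>R (Q *v y)) - \<gamma> *\<^sub>R bb) \<le> 1"
proof -
  define t0 where "t0 = (2 * real k - 2) / (2 * real k - 1)"
  define L where "L = Lk 1"
  define G where "G = 1 / \<gamma>"
  define ck where "ck = m * (4 * real k - 2)"
  define c' where "c' = m * (4 * real k - 4)"
  have Lp: "L > 0" unfolding L_def by (rule L1_pos)
  have LLk: "L \<le> Lk k" unfolding L_def by (rule L1_le[OF k])
  have GLk: "Lk k \<le> G" using g Lp LLk unfolding G_def by (simp add: field_simps)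
  have LG: "L \<le> G" using LLk GLk by simp
  have gG: "\<gamma> * G = 1" using g unfolding G_def by simp
  have k1: "2 * real k - 1 > 0" using k by simp
  have t0: "0 \<le> t0" "t0 \<le> 1" using k k1 unfolding t0_def by (auto simp: field_simps)
  have c'nn: "0 \<le> c'" using k mpos unfolding c'_def by simp
  have t0ck: "t0 * ck = c'" unfolding t0_def ck_def c'_def using k1 by (simp add: field_simps)
  have ckc: "ck - 2 * m = c'" unfolding ck_def c'_def by (simp add: algebra_simps)
  define z where "z = t0 *\<^sub>R (y - \<gamma> *\<^sub>R (Q *v y)) - \<gamma> *\<^sub>R bb"
  define d where "d = A *v z"
  define Zf where "Zf x = G *\<^sub>R x - Pk k x" for x
  define Yf where "Yf x = L *\<^sub>R x - Pk 1 x" for x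
  define yh where "yh = Ainv (Zf d)"
  define yh1 where "yh1 = Ainv (Yf d)"
  have Ayh: "A *v yh = Zf d" unfolding yh_def by (rule A_Ainv)
  have Ayh1: "A *v yh1 = Yf d" unfolding yh1_def by (rule A_Ainv)
  have Pkk: "Pk k x = Q *v x + ck *\<^sub>R (A *v x)" for x unfolding Pk_def ck_def ..
  have Pk1': "Pk 1 x = Q *v x + (2 * m) *\<^sub>R (A *v x)" for x by (rule Pk1)
  have z2: "z = \<gamma> *\<^sub>R (t0 *\<^sub>R Zf y + c' *\<^sub>R (A *v y) - bb)"
  proof -
    have "\<gamma> *\<^sub>R (t0 *\<^sub>R Zf y + c' *\<^sub>R (A *v y) - bb)
        = (\<gamma> * G * t0) *\<^sub>R y - (\<gamma> * t0) *\<^sub>R (Q *v y) + (\<gamma> * (c' - t0 * ck)) *\<^sub>R (A *v y) - \<gamma> *\<^sub>R bb"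
      unfolding Zf_def Pkk by (simp add: algebra_simps)
    also have "\<dots> = z" unfolding z_def gG t0ck by (simp add: algebra_simps)
    finally show ?thesis by simp
  qed
  have Nz: "N z = \<gamma> * ((t0 *\<^sub>R Zf d + c' *\<^sub>R (A *v d)) \<bullet> y - bb \<bullet> d)"
  proof -
    have "N z = d \<bullet> z" unfolding N_def d_def by (simp add: inner_commute)
    also have "\<dots> = \<gamma> * (t0 * (d \<bullet> Zf y) + c' * (d \<bullet> (A *v y)) - d \<bullet> bb)"
      unfolding z2 by (simp add: inner_add_right inner_diff_right)
    also have "d \<bullet> Zf y = Zf d \<bullet> y" unfolding Zf_def using Pk_sym[of d k y]
      by (simp add: inner_diff_right inner_diff_left inner_commute)
    also have "d \<bullet> (A *v y) = (A *v d) \<bullet> y" by (rule As)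
    finally show ?thesis by (simp add: inner_add_left inner_add_right inner_commute)
  qed
  have s4: "(t0 *\<^sub>R Zf d + c' *\<^sub>R (A *v d)) \<bullet> y \<le> sqrt (N (t0 *\<^sub>R yh + c' *\<^sub>R d))"
  proof -
    have "t0 *\<^sub>R Zf d + c' *\<^sub>R (A *v d) = A *v (t0 *\<^sub>R yh + c' *\<^sub>R d)"
      by (simp add: matrix_vector_right_distrib matrix_vector_mult_scaleR Ayh)
    then have "(t0 *\<^sub>R Zf d + c' *\<^sub>R (A *v d)) \<bullet> y = (t0 *\<^sub>R yh + c' *\<^sub>R d) \<bullet> (A *v y)"
      using As by simp
    also have "\<dots> \<le> sqrt (N (t0 *\<^sub>R yh + c' *\<^sub>R d)) * sqrt (N y)" by (rule N_cs')
    also have "\<dots> \<le> sqrt (N (t0 *\<^sub>R yh + c' *\<^sub>R d)) * 1"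
      using y Ann by (intro mult_left_mono) auto
    finally show ?thesis by simp
  qed
  have s5: "N (t0 *\<^sub>R yh + c' *\<^sub>R d) \<le> N (yh + c' *\<^sub>R d)"
  proof -
    have X: "0 \<le> yh \<bullet> (A *v d)"
    proof -
      have "yh \<bullet> (A *v d) = Zf d \<bullet> d" using As[of yh d] Ayh by simp
      also have "\<dots> = G * (d \<bullet> d) - d \<bullet> Pk k d" unfolding Zf_def
        by (simp add: inner_diff_left inner_diff_right inner_commute)
      finally have eq: "yh \<bullet> (A *v d) = G * (d \<bullet> d) - d \<bullet> Pk k d" .
      have "d \<bullet> Pk k d \<le> Lk k * (d \<bullet> d)" using Pk_ray[of d k] by (simp add: power2_norm_eq_inner)
      also have "\<dots> \<le> G * (d \<bullet> d)" using GLk by (rule mult_right_mono) simp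
      finally show ?thesis using eq by simp
    qed
    have "N (t0 *\<^sub>R yh + c' *\<^sub>R d) = t0^2 * N yh + 2 * (t0 * c') * (yh \<bullet> (A *v d)) + N (c' *\<^sub>R d)"
      unfolding N_add N_scale by (simp add: matrix_vector_mult_scaleR)
    also have "\<dots> \<le> 1 * N yh + 2 * c' * (yh \<bullet> (A *v d)) + N (c' *\<^sub>R d)"
    proof -
      have "t0^2 \<le> 1" using t0 by (simp add: power_le_one)
      then have a: "t0^2 * N yh \<le> 1 * N yh" using Ann by (intro mult_right_mono) auto
      have "t0 * c' \<le> c'" using t0 c'nn by (simp add: mult_left_le_one_le)
      then have b: "2 * (t0 * c') * (yh \<bullet> (A *v d)) \<le> 2 * c' * (yh \<bullet> (A *v d))"
        using X by (intro mult_right_mono) auto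
      show ?thesis using a b by simp
    qed
    also have "\<dots> = N (yh + c' *\<^sub>R d)"
      unfolding N_add by (simp add: matrix_vector_mult_scaleR)
    finally show ?thesis .
  qed
  have s6: "yh + c' *\<^sub>R d = yh1 + (G - L) *\<^sub>R z"
  proof (rule A_inj)
    have "A *v (yh + c' *\<^sub>R d) = G *\<^sub>R d - Q *v d - (ck - c') *\<^sub>R (A *v d)"
      unfolding matrix_vector_right_distrib matrix_vector_mult_scaleR Ayh Zf_def Pkk
      by (simp add: algebra_simps)
    also have "\<dots> = G *\<^sub>R d - Q *v d - (2 * m) *\<^sub>R (A *v d)" using ckc by (simp add: algebra_simps)
    also have "\<dots> = A *v (yh1 + (G - L) *\<^sub>R z)"
      unfolding matrix_vector_right_distrib matrix_vector_mult_scaleR Ayh1 Yf_def Pk1' d_def[symmetric]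
      by (simp add: algebra_simps)
    finally show "A *v (yh + c' *\<^sub>R d) = A *v (yh1 + (G - L) *\<^sub>R z)" .
  qed
  have s7: "sqrt (N (yh1 + (G - L) *\<^sub>R z)) \<le> sqrt (N yh1) + (G - L) * sqrt (N z)"
  proof -
    have "sqrt (N ((G - L) *\<^sub>R z)) = (G - L) * sqrt (N z)"
      unfolding N_scale using LG by (simp add: real_sqrt_mult)
    then show ?thesis using sqrtN_tri[of yh1 "(G - L) *\<^sub>R z"] by simp
  qed
  have s8: "sqrt (N yh1) - bb \<bullet> d \<le> L * sqrt (N z)"
  proof -
    define u where "u = (if N yh1 = 0 then 0 else (1 / sqrt (N yh1)) *\<^sub>R yh1)"
    have Nu: "N u \<le> 1"
    proof (cases "N yh1 = 0")
      case True then show ?thesis unfolding u_def by (simp add: N_def)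
    next
      case False
      then have p: "N yh1 > 0" using Ann[of yh1] by simp
      have "N u = (1 / sqrt (N yh1))^2 * N yh1" unfolding u_def using False by (simp add: N_scale)
      also have "\<dots> = 1" using p by (simp add: power_divide)
      finally show ?thesis by simp
    qed
    have yu: "yh1 \<bullet> (A *v u) = sqrt (N yh1)"
    proof (cases "N yh1 = 0")
      case True then show ?thesis unfolding u_def by simp
    next
      case False
      then have p: "N yh1 > 0" using Ann[of yh1] by simp
      have "yh1 \<bullet> (A *v u) = (1 / sqrt (N yh1)) * N yh1"
        unfolding u_def using False by (simp add: matrix_vector_mult_scaleR N_def)
      also have "\<dots> = sqrt (N yh1)" using p by (simp add: real_div_sqrt)
      finally show ?thesis .
    qed
    define Su where "Su = u - (1 / L) *\<^sub>R (Pk 1 u + bb)"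
    have NSu: "N Su \<le> 1" unfolding Su_def L_def by (rule S_in[OF Nu])
    have "d \<bullet> Su = z \<bullet> (A *v Su)" unfolding d_def by (simp add: As)
    also have "\<dots> \<le> sqrt (N z) * sqrt (N Su)" by (rule N_cs')
    also have "\<dots> \<le> sqrt (N z) * 1" using NSu Ann by (intro mult_left_mono) auto
    finally have h1: "d \<bullet> Su \<le> sqrt (N z)" by simp
    have "d \<bullet> Su = (1 / L) * (Yf d \<bullet> u - bb \<bullet> d)"
      unfolding Su_def Yf_def using Lp Pk_sym[of d 1 u]
      by (simp add: inner_diff_right inner_add_right inner_diff_left field_simps inner_commute)
    also have "Yf d \<bullet> u = yh1 \<bullet> (A *v u)" using As[of yh1 u] Ayh1 by simp
    finally have "(1 / L) * (sqrt (N yh1) - bb \<bullet> d) \<le> sqrt (N z)" using h1 yu by simp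
    then show ?thesis using Lp by (simp add: field_simps)
  qed
  have "N z \<le> \<gamma> * (sqrt (N (t0 *\<^sub>R yh + c' *\<^sub>R d)) - bb \<bullet> d)"
    unfolding Nz using s4 g by (intro mult_left_mono) auto
  also have "\<dots> \<le> \<gamma> * (sqrt (N (yh + c' *\<^sub>R d)) - bb \<bullet> d)"
    using s5 g by (intro mult_left_mono) auto
  also have "\<dots> \<le> \<gamma> * (sqrt (N yh1) + (G - L) * sqrt (N z) - bb \<bullet> d)"
    unfolding s6 using s7 g by (intro mult_left_mono) auto
  also have "\<dots> \<le> \<gamma> * (L * sqrt (N z) + (G - L) * sqrt (N z))"
    using s8 g by (intro mult_left_mono) auto
  also have "\<dots> = sqrt (N z)" using gG by (simp add: algebra_simps)
  finally have "N z \<le> sqrt (N z)" .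
  then have "N z \<le> 1" by (rule le_sqrt_imp)
  then show ?thesis unfolding z_def t0_def .
qed


lemma bern_aux:
  fixes t :: real
  assumes "0 \<le> t" "t \<le> 1"
  shows "t * (1 - t ^ n) * (real n + 1) \<le> real n * (1 - t ^ Suc n)"
proof -
  have "1 + real (Suc n) * (t - 1) \<le> (1 + (t - 1)) ^ Suc n"
    by (rule Bernoulli_inequality) (use assms in simp)
  then have "1 + (real n + 1) * (t - 1) \<le> t ^ Suc n" by (simp add: add.commute)
  then show ?thesis by (simp add: algebra_simps)
qed

lemma inv_step:
  assumes k: "k \<ge> 1" and g: "0 < \<gamma>" "\<gamma> \<le> 1 / Lk k" and u: "N u \<le> 1"
  shows "N (u - \<gamma> *\<^sub>R (Q *v u + bb + (m * N u ^ (k - 1)) *\<^sub>R (2 *\<^sub>R (A *v u)))) \<le> 1"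
proof -
  have L1p: "0 < Lk 1" by (rule L1_pos)
  have g1: "\<gamma> \<le> 1 / Lk 1"
  proof -
    have "1 / Lk k \<le> 1 / Lk 1" by (rule divide_left_mono) (use L1p L1_le[OF k] in auto)
    then show ?thesis using g by simp
  qed
  show ?thesis
  proof (cases "k = 1")
    case True
    have e: "Q *v u + bb + (m * N u ^ (k - 1)) *\<^sub>R (2 *\<^sub>R (A *v u)) = Pk 1 u + bb"
      unfolding True Pk1 by (simp add: algebra_simps)
    show ?thesis unfolding e using step_in[OF u _ g1] g by simp
  next
    case False
    then have k2: "k \<ge> 2" using k by simp
    obtain e t where e: "N e = 1" and t: "0 \<le> t" "t \<le> 1" and ue: "u = t *\<^sub>R e"
      using polar[OF u] by blast
    define n where "n = 2 * k - 2"
    have n2: "n \<ge> 2" using k2 unfolding n_def by simp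
    have rn: "real n = 2 * real k - 2" using k2 unfolding n_def by simp
    have Nuk: "N u ^ (k - 1) = t ^ n"
    proof -
      have "N u = t^2" unfolding ue N_scale e by simp
      then have "N u ^ (k - 1) = t ^ (2 * (k - 1))" by (simp add: power_mult)
      also have "2 * (k - 1) = n" unfolding n_def by simp
      finally show ?thesis .
    qed
    define \<theta> where "\<theta> = t ^ Suc n"
    define pa where "pa = e - \<gamma> *\<^sub>R (Pk 1 e + bb)"
    have Npa: "N pa \<le> 1" unfolding pa_def using step_in[OF _ _ g1] e g by simp
    show ?thesis
    proof (cases "t = 1")
      case True
      have "u - \<gamma> *\<^sub>R (Q *v u + bb + (m * N u ^ (k - 1)) *\<^sub>R (2 *\<^sub>R (A *v u))) = pa"
        unfolding Nuk unfolding pa_def ue True Pk1 by (simp add: algebra_simps)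
      then show ?thesis using Npa by simp
    next
      case False
      then have t1: "t < 1" using t by simp
      define t0 where "t0 = (2 * real k - 2) / (2 * real k - 1)"
      have t0p: "t0 > 0" using k2 unfolding t0_def by (simp add: field_simps)
      have t0n: "t0 = real n / (real n + 1)" unfolding t0_def rn by (simp add: algebra_simps)
      have th1: "\<theta> < 1"
      proof -
        have "t ^ n \<le> 1" using t by (simp add: power_le_one)
        then have "t * t ^ n \<le> t * 1" using t by (intro mult_left_mono) auto
        then show ?thesis unfolding \<theta>_def using t1 by simp
      qed
      have thn: "0 \<le> \<theta>" unfolding \<theta>_def using t by simp
      have tn1: "t ^ n \<le> 1" using t by (simp add: power_le_one)
      define \<kappa> where "\<kappa> = (1 - t ^ n) / ((1 - \<theta>) * t0)"
      have den: "(1 - \<theta>) * t0 > 0" using th1 t0p by simp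
      have kap: "(1 - \<theta>) * t0 * \<kappa> = 1 - t ^ n" unfolding \<kappa>_def using den
        by (metis nonzero_mult_div_cancel_left less_irrefl times_divide_eq_right)
      have kt0: "0 \<le> \<kappa> * t" unfolding \<kappa>_def using den tn1 t by simp
      have kt1: "\<kappa> * t \<le> 1"
      proof -
        have "t * (1 - t ^ n) * (real n + 1) \<le> real n * (1 - t ^ Suc n)" by (rule bern_aux[OF t])
        then have "t * (1 - t ^ n) \<le> t0 * (1 - \<theta>)" unfolding t0n \<theta>_def by (simp add: field_simps)
        then show ?thesis unfolding \<kappa>_def using den by (simp add: field_simps)
      qed
      define yb where "yb = (\<kappa> * t) *\<^sub>R e"
      have Nyb: "N yb \<le> 1" unfolding yb_def N_scale e using kt0 kt1 by (simp add: power_le_one)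
      define pb where "pb = t0 *\<^sub>R (yb - \<gamma> *\<^sub>R (Q *v yb)) - \<gamma> *\<^sub>R bb"
      have Npb: "N pb \<le> 1" unfolding pb_def t0_def by (rule phi_in[OF k g Nyb])
      have comb: "u - \<gamma> *\<^sub>R (Q *v u + bb + (m * N u ^ (k - 1)) *\<^sub>R (2 *\<^sub>R (A *v u))) = \<theta> *\<^sub>R pa + (1 - \<theta>) *\<^sub>R pb"
      proof -
        have h: "(1 - \<theta>) * t0 * \<kappa> * t = (1 - t ^ n) * t" using kap by simp
        have c1: "\<theta> + (1 - \<theta>) * t0 * \<kappa> * t = t" unfolding h unfolding \<theta>_def by (simp add: algebra_simps)
        have c2: "\<theta> = t * t ^ n" unfolding \<theta>_def by simp
        have "\<theta> *\<^sub>R pa + (1 - \<theta>) *\<^sub>R pb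
            = (\<theta> + (1 - \<theta>) * t0 * \<kappa> * t) *\<^sub>R e - (\<gamma> * (\<theta> + (1 - \<theta>) * t0 * \<kappa> * t)) *\<^sub>R (Q *v e)
              - (2 * \<gamma> * m * \<theta>) *\<^sub>R (A *v e) - \<gamma> *\<^sub>R bb"
          unfolding pa_def pb_def yb_def Pk1 by (simp add: algebra_simps matrix_vector_mult_scaleR)
        also have "\<dots> = t *\<^sub>R e - (\<gamma> * t) *\<^sub>R (Q *v e) - (2 * \<gamma> * m * (t * t ^ n)) *\<^sub>R (A *v e) - \<gamma> *\<^sub>R bb"
          unfolding c1 unfolding c2 ..
        also have "\<dots> = u - \<gamma> *\<^sub>R (Q *v u + bb + (m * N u ^ (k - 1)) *\<^sub>R (2 *\<^sub>R (A *v u)))"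
          unfolding Nuk unfolding ue by (simp add: algebra_simps matrix_vector_mult_scaleR)
        finally show ?thesis by simp
      qed
      show ?thesis unfolding comb by (rule N_conv[OF Npa Npb thn]) (use th1 in simp)
    qed
  qed
qed


lemma C_bounded: "\<exists>R\<ge>0. \<forall>u. N u \<le> 1 \<longrightarrow> norm u \<le> R"
proof -
  have "bounded_linear Ainv" using Ainv_linear by (simp add: linear_conv_bounded_linear)
  then obtain B where B: "\<And>x. norm (Ainv x) \<le> norm x * B" "B > 0"
    using bounded_linear.pos_bounded by blast
  have "norm u \<le> sqrt B" if u: "N u \<le> 1" for u
  proof -
    have "(norm u)^2 = Ainv u \<bullet> (A *v u)"
      using As[of "Ainv u" u] A_Ainv[of u] by (simp add: power2_norm_eq_inner)
    also have "\<dots> \<le> sqrt (N (Ainv u)) * sqrt (N u)" by (rule N_cs')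
    also have "\<dots> \<le> sqrt (N (Ainv u)) * 1" using u Ann by (intro mult_left_mono) auto
    finally have h1: "(norm u)^2 \<le> sqrt (N (Ainv u))" by simp
    have "N (Ainv u) = Ainv u \<bullet> u" unfolding N_def A_Ainv ..
    also have "\<dots> \<le> norm (Ainv u) * norm u" by (rule norm_cauchy_schwarz)
    also have "\<dots> \<le> (norm u * B) * norm u" using B by (intro mult_right_mono) auto
    finally have h2: "N (Ainv u) \<le> B * (norm u)^2" by (simp add: power2_eq_square algebra_simps)
    have "((norm u)^2)^2 \<le> (sqrt (N (Ainv u)))^2"
      using h1 by (intro power_mono) auto
    also have "\<dots> = N (Ainv u)" using Ann by simp
    finally have "((norm u)^2)^2 \<le> B * (norm u)^2" using h2 by simp
    then have "(norm u)^2 \<le> B"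
    proof (cases "u = 0")
      case False
      then have "(norm u)^2 > 0" by simp
      moreover assume "((norm u)^2)^2 \<le> B * (norm u)^2"
      ultimately show ?thesis
        by (metis (no_types) mult_right_le_imp_le power2_eq_square)
    qed (use B in simp)
    then show ?thesis by (simp add: real_le_rsqrt)
  qed
  then show ?thesis using B by (intro exI[of _ "sqrt B"]) auto
qed

lemma sigQ_bound: "norm (Q *v y) \<le> sigma_max Q * norm y"
  unfolding sigma_max_def by (rule onorm[OF matrix_vector_mul_bounded_linear])

lemma sigQ_nn: "0 \<le> sigma_max Q"
  unfolding sigma_max_def by (rule onorm_pos_le[OF matrix_vector_mul_bounded_linear])

lemma pow_aux:
  fixes s :: real
  assumes "0 \<le> s" "s \<le> 1" "k \<ge> 1"
  shows "real k * s ^ (k - 1) * (1 - s) \<le> 1"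
proof -
  have "(\<Sum>i<k. s ^ (k - 1)) \<le> (\<Sum>i<k. s ^ i)"
    by (rule sum_mono) (use assms in \<open>auto intro: power_decreasing\<close>)
  then have "real k * s ^ (k - 1) \<le> (\<Sum>i<k. s ^ i)" by simp
  then have "real k * s ^ (k - 1) * (1 - s) \<le> (\<Sum>i<k. s ^ i) * (1 - s)"
    using assms by (intro mult_right_mono) auto
  also have "\<dots> = 1 - s ^ k" using one_diff_power_eq[of s k] by (simp add: mult.commute)
  also have "\<dots> \<le> 1" using assms by simp
  finally show ?thesis .
qed

lemma grad_J: "k \<ge> 1 \<Longrightarrow> grad (Jpen Q q A v m k) x
   = Q *v (x - v) + bb + (m * N (x - v) ^ (k - 1)) *\<^sub>R (2 *\<^sub>R (A *v (x - v)))"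
  using grad_Jpen[OF Qsym Asym, of k q v m x] unfolding bb_def N_e_gcon
  by (simp add: matrix_vector_mult_diff_distrib algebra_simps)

lemma grad_bound:
  assumes R: "\<forall>u. N u \<le> 1 \<longrightarrow> norm u \<le> R" and k: "k \<ge> 1" and x: "N (x - v) \<le> 1"
  shows "norm (grad (Jpen Q q A v m k) x) \<le> sigma_max Q * R + norm bb + 2 * m * sigma_max A * R"
proof -
  have xr: "norm (x - v) \<le> R" using R x by blast
  have p: "N (x - v) ^ (k - 1) \<le> 1" "0 \<le> N (x - v) ^ (k - 1)" using x Ann by (auto simp: power_le_one)
  have "norm (grad (Jpen Q q A v m k) x) \<le> norm (Q *v (x - v)) + norm bb
      + norm ((m * N (x - v) ^ (k - 1)) *\<^sub>R (2 *\<^sub>R (A *v (x - v))))"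
    unfolding grad_J[OF k] by (intro order_trans[OF norm_triangle_ineq] add_mono norm_triangle_ineq) auto
  also have "\<dots> \<le> sigma_max Q * R + norm bb + 2 * m * sigma_max A * R"
  proof (intro add_mono)
    show "norm (Q *v (x - v)) \<le> sigma_max Q * R"
      using sigQ_bound[of "x - v"] xr sigQ_nn by (meson mult_left_mono order_trans)
    have "norm ((m * N (x - v) ^ (k - 1)) *\<^sub>R (2 *\<^sub>R (A *v (x - v))))
        = m * N (x - v) ^ (k - 1) * (2 * norm (A *v (x - v)))" using mpos p by simp
    also have "\<dots> \<le> m * 1 * (2 * (sigma_max A * R))"
      using mpos p sigA_bound[of "x - v"] xr sigA_nn
      by (intro mult_mono) (auto intro: order_trans mult_left_mono)
    finally show "norm ((m * N (x - v) ^ (k - 1)) *\<^sub>R (2 *\<^sub>R (A *v (x - v)))) \<le> 2 * m * sigma_max A * R"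
      by simp
  qed simp
  finally show ?thesis .
qed

lemma f_diff: "fobj Q q y - fobj Q q x = ((1/2) *\<^sub>R (Q *v (x + y)) + q) \<bullet> (y - x)"
proof -
  have a1: "(Q *v x) \<bullet> x = x \<bullet> (Q *v x)" by (rule inner_commute)
  have a2: "(Q *v y) \<bullet> y = y \<bullet> (Q *v y)" by (rule inner_commute)
  have a3: "(Q *v y) \<bullet> x = (Q *v x) \<bullet> y" using Qs[of x y] by (simp add: inner_commute)
  show ?thesis unfolding fobj_def
    by (simp add: matrix_vector_right_distrib inner_add_left inner_diff_right a1 a2 a3 algebra_simps)
qed

lemma f_lip:
  assumes R: "\<forall>u. N u \<le> 1 \<longrightarrow> norm u \<le> R" and x: "N (x - v) \<le> 1" and y: "N (y - v) \<le> 1"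
  shows "fobj Q q y - fobj Q q x \<le> (sigma_max Q * (norm v + R) + norm q) * norm (y - x)"
proof -
  have nx: "norm x \<le> norm v + R" using R x norm_triangle_sub[of x v] by (smt (verit))
  have ny: "norm y \<le> norm v + R" using R y norm_triangle_sub[of y v] by (smt (verit))
  have "norm ((1/2) *\<^sub>R (Q *v (x + y)) + q) \<le> (1/2) * norm (Q *v (x + y)) + norm q"
    by (rule order_trans[OF norm_triangle_ineq]) simp
  also have "\<dots> \<le> (1/2) * (sigma_max Q * (norm x + norm y)) + norm q"
  proof -
    have "norm (Q *v (x + y)) \<le> sigma_max Q * (norm x + norm y)"
      using sigQ_bound[of "x + y"] sigQ_nn norm_triangle_ineq[of x y]
      by (meson mult_left_mono order_trans)
    then show ?thesis by simp
  qed
  also have "\<dots> \<le> sigma_max Q * (norm v + R) + norm q"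
  proof -
    have "sigma_max Q * (norm x + norm y) \<le> sigma_max Q * (2 * (norm v + R))"
      using nx ny sigQ_nn by (intro mult_left_mono) auto
    then show ?thesis by (simp add: algebra_simps)
  qed
  finally have nb: "norm ((1/2) *\<^sub>R (Q *v (x + y)) + q) \<le> sigma_max Q * (norm v + R) + norm q" .
  have "fobj Q q y - fobj Q q x \<le> norm ((1/2) *\<^sub>R (Q *v (x + y)) + q) * norm (y - x)"
    unfolding f_diff by (rule norm_cauchy_schwarz)
  also have "\<dots> \<le> (sigma_max Q * (norm v + R) + norm q) * norm (y - x)"
    using nb by (rule mult_right_mono) simp
  finally show ?thesis .
qed

lemma convex_ineq:
  assumes k: "k \<ge> 1" and x: "N (x - v) \<le> 1" and y: "N (y - v) \<le> 1"
  shows "fobj Q q x - fobj Q q y - m / real k \<le> grad (Jpen Q q A v m k) x \<bullet> (x - y)"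
proof -
  define u where "u = x - v"
  define w where "w = y - v"
  have xy: "x - y = u - w" unfolding u_def w_def by simp
  have gx: "Q *v (x - v) + bb = Q *v x + q" unfolding bb_def by (simp add: matrix_vector_mult_diff_distrib)
  have t1: "(Q *v x + q) \<bullet> (x - y) = fobj Q q x - fobj Q q y + (1/2) * ((x - y) \<bullet> (Q *v (x - y)))"
  proof -
    have b1: "(Q *v x) \<bullet> x = x \<bullet> (Q *v x)" by (rule inner_commute)
    have b2: "(Q *v x) \<bullet> y = x \<bullet> (Q *v y)" using Qs[of x y] by simp
    have b3: "y \<bullet> (Q *v x) = x \<bullet> (Q *v y)" using Qs[of y x] b2 by (simp add: inner_commute)
    show ?thesis unfolding fobj_def
      by (simp add: matrix_vector_mult_diff_distrib inner_diff_left inner_diff_right inner_add_left b1 b2 b3 algebra_simps)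
  qed
  have q0: "0 \<le> (x - y) \<bullet> (Q *v (x - y))" by (rule Qnn)
  have t2: "N u - N w \<le> (2 *\<^sub>R (A *v u)) \<bullet> (u - w)"
  proof -
    have "0 \<le> N (u - w)" by (rule Ann)
    then show ?thesis unfolding N_diff using As[of u w]
      by (simp add: inner_diff_right N_def inner_commute)
  qed
  define s where "s = N u"
  have s: "0 \<le> s" "s \<le> 1" using Ann x unfolding s_def u_def by auto
  have sk: "0 \<le> s ^ (k - 1)" using s by simp
  have "m * s ^ (k - 1) * (s - 1) \<le> m * s ^ (k - 1) * (N u - N w)"
    using y mpos sk unfolding s_def w_def by (intro mult_left_mono) auto
  also have "\<dots> \<le> m * s ^ (k - 1) * ((2 *\<^sub>R (A *v u)) \<bullet> (u - w))"
    using t2 mpos sk by (intro mult_left_mono) auto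
  finally have h2: "m * s ^ (k - 1) * (s - 1) \<le> m * s ^ (k - 1) * ((2 *\<^sub>R (A *v u)) \<bullet> (u - w))" .
  have h3: "- (m / real k) \<le> m * s ^ (k - 1) * (s - 1)"
  proof -
    have "real k * s ^ (k - 1) * (1 - s) \<le> 1" by (rule pow_aux[OF s k])
    then have "s ^ (k - 1) * (1 - s) \<le> 1 / real k" using k by (simp add: field_simps)
    then have "m * (s ^ (k - 1) * (1 - s)) \<le> m * (1 / real k)" using mpos by (intro mult_left_mono) auto
    then show ?thesis by (simp add: algebra_simps)
  qed
  have "grad (Jpen Q q A v m k) x \<bullet> (x - y)
      = (Q *v x + q) \<bullet> (x - y) + m * s ^ (k - 1) * ((2 *\<^sub>R (A *v u)) \<bullet> (u - w))"
    unfolding grad_J[OF k] gx unfolding s_def u_def[symmetric] xy by (simp add: inner_add_left)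
  then show ?thesis using t1 q0 h2 h3 unfolding xy by simp
qed




lemma main:
  fixes \<gamma> :: "nat \<Rightarrow> real" and x :: "nat \<Rightarrow> real^'n" and xstar :: "real^'n"
  assumes x1: "gcon A v (x 1) \<le> 1"
    and iter: "\<And>k. k \<ge> 1 \<Longrightarrow> x (Suc k) = x k - \<gamma> k *\<^sub>R grad (Jpen Q q A v m k) (x k)"
    and step: "\<And>k. k \<ge> 1 \<Longrightarrow> 0 < \<gamma> k \<and> \<gamma> k \<le> 1 / Lconst Q A m k"
    and sq: "summable (\<lambda>k. (\<gamma> (Suc k))^2)"
    and div: "\<not> summable (\<lambda>k. \<gamma> (Suc k))"
    and xs1: "gcon A v xstar \<le> 1" and xs2: "\<forall>y. gcon A v y \<le> 1 \<longrightarrow> fobj Q q xstar \<le> fobj Q q y"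
  shows "(\<lambda>k. fobj Q q (x k)) \<longlonglongrightarrow> fobj Q q xstar"
proof -
  have inC: "N (x k - v) \<le> 1" if "k \<ge> 1" for k
    using that
  proof (induction k rule: nat_induct_at_least)
    case base
    then show ?case using x1 by (simp add: N_e_gcon)
  next
    case (Suc n)
    have st: "0 < \<gamma> n" "\<gamma> n \<le> 1 / Lk n" using step[OF Suc.hyps] unfolding Lk_def by auto
    have eq: "x (Suc n) - v = (x n - v) - \<gamma> n *\<^sub>R (Q *v (x n - v) + bb
        + (m * N (x n - v) ^ (n - 1)) *\<^sub>R (2 *\<^sub>R (A *v (x n - v))))"
      unfolding iter[OF Suc.hyps] grad_J[OF Suc.hyps] by simp
    show ?case unfolding eq by (rule inv_step[OF Suc.hyps st Suc.IH])
  qed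
  define X where "X n = x (Suc n)" for n
  define \<beta> where "\<beta> n = \<gamma> (Suc n)" for n
  define gr where "gr n = grad (Jpen Q q A v m (Suc n)) (X n)" for n
  have XC: "N (X n - v) \<le> 1" for n unfolding X_def by (rule inC) simp
  have Xrec: "X (Suc n) = X n - \<beta> n *\<^sub>R gr n" for n
    unfolding X_def \<beta>_def gr_def by (rule iter) simp
  have b0: "0 < \<beta> n" for n unfolding \<beta>_def using step[of "Suc n"] by simp
  obtain R where R: "R \<ge> 0" "\<forall>u. N u \<le> 1 \<longrightarrow> norm u \<le> R" using C_bounded by blast
  define G0 where "G0 = sigma_max Q * R + norm bb + 2 * m * sigma_max A * R"
  have grb: "norm (gr n) \<le> G0" for n
    unfolding gr_def G0_def by (rule grad_bound[OF R(2) _ XC]) simp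
  have G0: "0 \<le> G0" using grb[of 0] norm_ge_zero order_trans by blast
  define K0 where "K0 = sigma_max Q * (norm v + R) + norm q"
  have K0: "0 \<le> K0" unfolding K0_def using sigQ_nn R by simp
  define fs where "fs = fobj Q q xstar"
  define a where "a n = fobj Q q (X n) - fs" for n
  have xsC: "N (xstar - v) \<le> 1" using xs1 by (simp add: N_e_gcon)
  have a0: "0 \<le> a n" for n
    unfolding a_def fs_def using xs2 XC[of n] by (simp add: N_e_gcon)
  define D where "D n = (norm (X n - xstar))^2" for n
  define eps where "eps n = 2 * m * (\<beta> n / real (Suc n)) + (\<beta> n)^2 * G0^2" for n
  have E: "D (Suc n) \<le> D n - 2 * \<beta> n * a n + eps n" for n
  proof -
    have cv: "a n - m / real (Suc n) \<le> gr n \<bullet> (X n - xstar)"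
      using convex_ineq[of "Suc n" "X n" xstar] XC[of n] xsC unfolding a_def fs_def gr_def by simp
    have "D (Suc n) = (norm ((X n - xstar) - \<beta> n *\<^sub>R gr n))^2"
      unfolding D_def Xrec by (simp add: algebra_simps)
    also have "\<dots> = D n - 2 * \<beta> n * (gr n \<bullet> (X n - xstar)) + (\<beta> n)^2 * (norm (gr n))^2"
      unfolding D_def power2_norm_eq_inner
      by (simp add: inner_diff_left inner_diff_right inner_commute power2_eq_square algebra_simps)
    also have "\<dots> \<le> D n - 2 * \<beta> n * (a n - m / real (Suc n)) + (\<beta> n)^2 * G0^2"
    proof -
      have "2 * \<beta> n * (a n - m / real (Suc n)) \<le> 2 * \<beta> n * (gr n \<bullet> (X n - xstar))"
        using cv b0[of n] by (intro mult_left_mono) auto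
      moreover have "(\<beta> n)^2 * (norm (gr n))^2 \<le> (\<beta> n)^2 * G0^2"
        using grb[of n] by (intro mult_left_mono power_mono) auto
      ultimately show ?thesis by simp
    qed
    also have "\<dots> = D n - 2 * \<beta> n * a n + eps n" unfolding eps_def by (simp add: algebra_simps)
    finally show ?thesis .
  qed
  have sb2: "summable (\<lambda>n. (\<beta> n)^2)" using sq unfolding \<beta>_def .
  have sinv: "summable (\<lambda>n. (1 / real (Suc n))^2)"
  proof -
    have "summable (\<lambda>n. inverse (real n ^ 2))" by (rule inverse_power_summable) simp
    then have "summable (\<lambda>n. inverse (real (Suc n) ^ 2))" by (subst summable_Suc_iff)
    then show ?thesis by (simp add: power_one_over inverse_eq_divide)
  qed
  have sbn: "summable (\<lambda>n. \<beta> n / real (Suc n))"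
  proof (rule summable_comparison_test'[OF summable_add[OF sb2 sinv]])
    fix n :: nat
    have "0 \<le> (\<beta> n - 1 / real (Suc n))^2" by simp
    then have "2 * (\<beta> n * (1 / real (Suc n))) \<le> (\<beta> n)^2 + (1 / real (Suc n))^2"
      by (simp add: power2_diff algebra_simps)
    moreover have "\<beta> n * (1 / real (Suc n)) \<ge> 0" using b0[of n] by simp
    ultimately have "\<beta> n * (1 / real (Suc n)) \<le> (\<beta> n)^2 + (1 / real (Suc n))^2" by linarith
    then show "norm (\<beta> n / real (Suc n)) \<le> (\<beta> n)^2 + (1 / real (Suc n))^2"
      using b0[of n] by simp
  qed
  have seps: "summable eps" unfolding eps_def
    by (intro summable_add summable_mult summable_mult2 sbn sb2)
  have eps0: "0 \<le> eps n" for n unfolding eps_def using b0[of n] mpos by simp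
  have part: "2 * (\<Sum>i<M. \<beta> i * a i) \<le> D 0 - D M + (\<Sum>i<M. eps i)" for M
  proof (induction M)
    case 0 then show ?case by simp
  next
    case (Suc M)
    then show ?case using E[of M] by (simp add: algebra_simps)
  qed
  have sba: "summable (\<lambda>n. \<beta> n * a n)"
  proof (rule summableI_nonneg_bounded)
    show "0 \<le> \<beta> n * a n" for n using b0[of n] a0[of n] by simp
    fix M
    have "(\<Sum>i<M. eps i) \<le> suminf eps" by (rule sum_le_suminf[OF seps]) (auto simp: eps0)
    moreover have "0 \<le> D M" unfolding D_def by simp
    ultimately show "(\<Sum>i<M. \<beta> i * a i) \<le> (D 0 + suminf eps) / 2" using part[of M] by simp
  qed
  have inc: "a (Suc n) - a n \<le> (K0 * G0 + 1) * \<beta> n" for n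
  proof -
    have "a (Suc n) - a n = fobj Q q (X (Suc n)) - fobj Q q (X n)" unfolding a_def by simp
    also have "\<dots> \<le> K0 * norm (X (Suc n) - X n)"
      unfolding K0_def by (rule f_lip[OF R(2) XC XC])
    also have "norm (X (Suc n) - X n) = \<beta> n * norm (gr n)" unfolding Xrec using b0[of n] by simp
    also have "K0 * (\<beta> n * norm (gr n)) \<le> K0 * (\<beta> n * G0)"
      using grb[of n] b0[of n] K0 by (intro mult_left_mono) auto
    also have "\<dots> \<le> (K0 * G0 + 1) * \<beta> n" using b0[of n] by (simp add: algebra_simps)
    finally show ?thesis .
  qed
  have bt: "\<beta> \<longlonglongrightarrow> 0"
  proof -
    have "(\<lambda>n. (\<beta> n)^2) \<longlonglongrightarrow> 0" by (rule summable_LIMSEQ_zero[OF sb2])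
    then have "(\<lambda>n. sqrt ((\<beta> n)^2)) \<longlonglongrightarrow> sqrt 0" by (rule tendsto_real_sqrt)
    then show ?thesis using b0 by (simp add: less_imp_le)
  qed
  have nsb: "\<not> summable \<beta>" using div unfolding \<beta>_def .
  have "a \<longlonglongrightarrow> 0"
    by (rule crossing[OF a0 _ sba nsb bt inc]) (use b0 G0 K0 in \<open>auto intro: less_imp_le add_nonneg_pos\<close>)
  then have "(\<lambda>n. a n + fs) \<longlonglongrightarrow> 0 + fs" by (intro tendsto_add tendsto_const)
  then have "(\<lambda>n. fobj Q q (x (Suc n))) \<longlonglongrightarrow> fs" unfolding a_def X_def by simp
  then show ?thesis unfolding fs_def by (rule LIMSEQ_imp_Suc)
qed


end

theorem theorem1:
  fixes Q A :: "real^'n^'n" and q v :: "real^'n" and m :: real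
    and \<gamma> :: "nat \<Rightarrow> real" and x :: "nat \<Rightarrow> real^'n" and xstar :: "real^'n"
  assumes Q: "sym_psd Q"
    and A: "sym_pd A"
    and m: "m > 0"
    and req: "requirement2 Q q A v m"
    and x1: "gcon A v (x 1) \<le> 1"
    and iter: "\<And>k. k \<ge> 1 \<Longrightarrow> x (Suc k) = x k - \<gamma> k *\<^sub>R grad (Jpen Q q A v m k) (x k)"
    and step: "\<And>k. k \<ge> 1 \<Longrightarrow> 0 < \<gamma> k \<and> \<gamma> k \<le> 1 / Lconst Q A m k"
    and sq: "summable (\<lambda>k. (\<gamma> (Suc k))^2)"
    and div: "\<not> summable (\<lambda>k. \<gamma> (Suc k))"
    and xstar: "gcon A v xstar \<le> 1" "\<forall>y. gcon A v y \<le> 1 \<longrightarrow> fobj Q q xstar \<le> fobj Q q y"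
  shows "(\<lambda>k. fobj Q q (x k)) \<longlonglongrightarrow> fobj Q q xstar"
proof -
  interpret setting Q A q v m
    by (rule setting.intro) (rule Q, rule A, rule m, rule req)
  show ?thesis by (rule main[OF x1 iter step sq div xstar(1) xstar(2)])
qed

end
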